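(* Let $a_1,\dots,a_n\in\overline K$ ($n\ge2$) be pairwise distinct, let $A$ be the associated magic matrix and $(\mathcal R,\gamma)$ the associated tree. Then $A=\sum_{T\in\mathcal R}\gamma(T)A(T)$.
   Context: $\overline{K}=\bigcup_{d\ge1}\mathbf{C}[[x^{1/d}]][1/x]$ with valuation $\nu$. $m_{i,j}=\nu(a_i-a_j)$, $m_i=\sum_{j\ne i}m_{i,j}$; $A$ has entries $-m_{i,j}$ off the diagonal and $m_i$ on the diagonal. $T_0=\{1,\dots,n\}$; a "rameau" is $T\subset T_0$ with $|T|\ge2$ such that $m_{i,j}>m_{i,k}=m_{j,k}$ for all $i\ne j$ in $T$ and $k\notin T$; $\mathcal R$ is the set of rameaux. $\alpha(T)=\inf\{m_{i,j}:i\ne j\in T\}$; $\gamma(T_0)=\alpha(T_0)$ and, for $T\neq T_0$, $\gamma(T)=\alpha(T)-\alpha(T')$ with $T'$ the smallest element of $\mathcal R$ strictly containing $T$. For $T\subset T_0$ of cardinality $n(T)\ge2$, $A(T)=(\alpha_{i,j})$ with $\alpha_{i,j}=-1$ if $i\ne j$ and $\{i,j\}\subset T$, $\alpha_{i,i}=n(T)-1$ if $i\in T$, and $0$ otherwise. *)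

theory Defs
  imports Complex_Main
begin

text \<open>The field of formal Puiseux series over the complex numbers,
  bar K = union over d of C[[x^(1/d)]][1/x], modelled as coefficient functions
  rat => complex whose support is contained in (1/d) Z and bounded below.
  Only the additive structure (subtraction) and the valuation are needed.\<close>

definition puiseux :: "(rat \<Rightarrow> complex) set" where
  "puiseux = {f. \<exists>d::nat. d \<ge> 1 \<and> (\<exists>N::int. \<forall>q. f q \<noteq> 0 \<longrightarrow>
      (\<exists>k::int. k \<ge> N \<and> q = of_int k / of_nat d))}"

definition nu :: "(rat \<Rightarrow> complex) \<Rightarrow> rat" where
  "nu f = (LEAST q. f q \<noteq> 0)"

definition mij :: "(nat \<Rightarrow> rat \<Rightarrow> complex) \<Rightarrow> nat \<Rightarrow> nat \<Rightarrow> rat" where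
  "mij a i j = nu (a i - a j)"

definition mi :: "nat \<Rightarrow> (nat \<Rightarrow> rat \<Rightarrow> complex) \<Rightarrow> nat \<Rightarrow> rat" where
  "mi n a i = (\<Sum>j\<in>{1..n} - {i}. mij a i j)"

definition magic :: "nat \<Rightarrow> (nat \<Rightarrow> rat \<Rightarrow> complex) \<Rightarrow> nat \<Rightarrow> nat \<Rightarrow> rat" where
  "magic n a i j = (if i = j then mi n a i else - mij a i j)"

definition rameau :: "nat \<Rightarrow> (nat \<Rightarrow> rat \<Rightarrow> complex) \<Rightarrow> nat set \<Rightarrow> bool" where
  "rameau n a T \<longleftrightarrow> T \<subseteq> {1..n} \<and> card T \<ge> 2 \<and>
     (\<forall>i\<in>T. \<forall>j\<in>T. i \<noteq> j \<longrightarrow> (\<forall>k\<in>{1..n} - T.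
        mij a i j > mij a i k \<and> mij a i k = mij a j k))"

definition rameaux :: "nat \<Rightarrow> (nat \<Rightarrow> rat \<Rightarrow> complex) \<Rightarrow> nat set set" where
  "rameaux n a = {T. rameau n a T}"

definition alpha :: "(nat \<Rightarrow> rat \<Rightarrow> complex) \<Rightarrow> nat set \<Rightarrow> rat" where
  "alpha a T = Min {mij a i j | i j. i \<in> T \<and> j \<in> T \<and> i \<noteq> j}"

definition parent :: "nat \<Rightarrow> (nat \<Rightarrow> rat \<Rightarrow> complex) \<Rightarrow> nat set \<Rightarrow> nat set" where
  "parent n a T = (THE T'. T' \<in> rameaux n a \<and> T \<subset> T' \<and>
      (\<forall>S\<in>rameaux n a. T \<subset> S \<longrightarrow> T' \<subseteq> S))"

definition gamma :: "nat \<Rightarrow> (nat \<Rightarrow> rat \<Rightarrow> complex) \<Rightarrow> nat set \<Rightarrow> rat" where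
  "gamma n a T = (if T = {1..n} then alpha a {1..n}
                  else alpha a T - alpha a (parent n a T))"

definition AT :: "nat set \<Rightarrow> nat \<Rightarrow> nat \<Rightarrow> rat" where
  "AT T i j = (if i \<in> T \<and> j \<in> T then (if i = j then of_nat (card T) - 1 else -1) else 0)"

end

theory Submission
  imports Defs
begin

lemma puiseux_diff:
  assumes "f \<in> puiseux" "g \<in> puiseux" shows "f - g \<in> puiseux"
proof -
  obtain d1 N1 where d1: "d1 \<ge> (1::nat)" and h1: "\<forall>q. f q \<noteq> 0 \<longrightarrow> (\<exists>k::int. k \<ge> N1 \<and> q = of_int k / of_nat d1)"
    using assms(1) unfolding puiseux_def by blast
  obtain d2 N2 where d2: "d2 \<ge> (1::nat)" and h2: "\<forall>q. g q \<noteq> 0 \<longrightarrow> (\<exists>k::int. k \<ge> N2 \<and> q = of_int k / of_nat d2)"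
    using assms(2) unfolding puiseux_def by blast
  define N where "N = min (N1 * int d2) (N2 * int d1)"
  have "\<forall>q. (f - g) q \<noteq> 0 \<longrightarrow> (\<exists>k::int. k \<ge> N \<and> q = of_int k / of_nat (d1*d2))"
  proof (intro allI impI)
    fix q assume "(f - g) q \<noteq> 0"
    then have "f q \<noteq> 0 \<or> g q \<noteq> 0" by auto
    then show "\<exists>k::int. k \<ge> N \<and> q = of_int k / of_nat (d1*d2)"
    proof
      assume "f q \<noteq> 0"
      then obtain k where k: "k \<ge> N1" "q = of_int k / of_nat d1" using h1 by blast
      have "k * int d2 \<ge> N1 * int d2" using k d2 by (simp add: mult_right_mono)
      moreover have "q = of_int (k * int d2) / of_nat (d1*d2)" using k d1 d2 by (simp add: field_simps)
      ultimately show ?thesis unfolding N_def by (intro exI[of _ "k * int d2"]) auto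
    next
      assume "g q \<noteq> 0"
      then obtain k where k: "k \<ge> N2" "q = of_int k / of_nat d2" using h2 by blast
      have "k * int d1 \<ge> N2 * int d1" using k d1 by (simp add: mult_right_mono)
      moreover have "q = of_int (k * int d1) / of_nat (d1*d2)" using k d1 d2 by (simp add: field_simps)
      ultimately show ?thesis unfolding N_def by (intro exI[of _ "k * int d1"]) auto
    qed
  qed
  moreover have "d1 * d2 \<ge> 1" using d1 d2 by simp
  ultimately show ?thesis unfolding puiseux_def by blast
qed

lemma nu_min:
  assumes "f \<in> puiseux" "\<exists>q. f q \<noteq> 0"
  shows "f (nu f) \<noteq> 0 \<and> (\<forall>q. f q \<noteq> 0 \<longrightarrow> nu f \<le> q)"
proof -
  obtain d N where d: "d \<ge> (1::nat)" and h: "\<forall>q. f q \<noteq> 0 \<longrightarrow> (\<exists>k::int. k \<ge> N \<and> q = of_int k / of_nat d)"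
    using assms(1) unfolding puiseux_def by blast
  obtain q1 where q1: "f q1 \<noteq> 0" using assms(2) by blast
  then obtain k1 where k1: "k1 \<ge> N" "q1 = of_int k1 / of_nat d" using h by blast
  define P where "P = (\<lambda>m::nat. f (of_int (N + int m) / of_nat d) \<noteq> 0)"
  have "P (nat (k1 - N))" using q1 k1 unfolding P_def by simp
  define m0 where "m0 = (LEAST m. P m)"
  have Pm0: "P m0" unfolding m0_def by (rule LeastI) fact
  define q0 where "q0 = (of_int (N + int m0) / of_nat d :: rat)"
  have f0: "f q0 \<noteq> 0" using Pm0 unfolding P_def q0_def by simp
  have le: "q0 \<le> q" if fq: "f q \<noteq> 0" for q
  proof -
    obtain k where k: "k \<ge> N" "q = of_int k / of_nat d" using h fq by blast
    have "P (nat (k - N))" using fq k unfolding P_def by simp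
    then have "m0 \<le> nat (k - N)" unfolding m0_def by (rule Least_le)
    then have "N + int m0 \<le> k" using k by linarith
    then have "(of_int (N + int m0) :: rat) \<le> of_int k" by linarith
    then show ?thesis unfolding q0_def k(2) using d by (simp add: divide_right_mono)
  qed
  have "nu f = q0" unfolding nu_def by (rule Least_equality) (use f0 le in auto)
  then show ?thesis using f0 le by simp
qed

lemma nu_ultra:
  assumes "f \<in> puiseux" "g \<in> puiseux" "h \<in> puiseux" "f \<noteq> g" "g \<noteq> h" "f \<noteq> h"
  shows "min (nu (f - g)) (nu (g - h)) \<le> nu (f - h)"
proof -
  have ne: "\<exists>q. (u - v) q \<noteq> 0" if "u \<noteq> v" for u v :: "rat \<Rightarrow> complex"
    using that by (metis diff_eq_eq eq_iff_diff_eq_0 ext fun_diff_def)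
  have "(f - h) (nu (f - h)) \<noteq> 0" using nu_min[OF puiseux_diff[OF assms(1,3)] ne[OF assms(6)]] by blast
  then have "(f - g) (nu (f - h)) \<noteq> 0 \<or> (g - h) (nu (f - h)) \<noteq> 0" by (auto simp: fun_diff_def)
  then show ?thesis using nu_min[OF puiseux_diff[OF assms(1,2)] ne[OF assms(4)]]
      nu_min[OF puiseux_diff[OF assms(2,3)] ne[OF assms(5)]]
    by (meson min.coboundedI1 min.coboundedI2)
qed

lemma nu_sym: "nu (f - g) = nu (g - f)"
proof -
  have "(\<lambda>q. (f - g) q \<noteq> 0) = (\<lambda>q. (g - f) q \<noteq> 0)"
    by (auto simp: fun_diff_def)
  then show ?thesis unfolding nu_def by simp
qed


locale ctx =
  fixes n :: nat and a :: "nat \<Rightarrow> rat \<Rightarrow> complex"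
  assumes n2: "n \<ge> 2"
    and puis: "\<forall>i\<in>{1..n}. a i \<in> puiseux"
    and dist: "\<forall>i\<in>{1..n}. \<forall>j\<in>{1..n}. i \<noteq> j \<longrightarrow> a i \<noteq> a j"
begin

lemma msym: "mij a i j = mij a j i"
  unfolding mij_def by (rule nu_sym)

lemma ultra:
  assumes "i \<in> {1..n}" "j \<in> {1..n}" "k \<in> {1..n}" "i \<noteq> j" "j \<noteq> k" "i \<noteq> k"
  shows "min (mij a i j) (mij a j k) \<le> mij a i k"
  unfolding mij_def using assms puis dist by (intro nu_ultra) auto

lemma T0: "rameau n a {1..n}"
  unfolding rameau_def using n2 by auto

lemma laminar:
  assumes T: "rameau n a T" and S: "rameau n a S" and x: "x \<in> T" "x \<in> S"
  shows "T \<subseteq> S \<or> S \<subseteq> T"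
proof (rule ccontr)
  assume "\<not> ?thesis"
  then obtain t s where t: "t \<in> T" "t \<notin> S" and s: "s \<in> S" "s \<notin> T" by blast
  have I: "T \<subseteq> {1..n}" "S \<subseteq> {1..n}" using T S unfolding rameau_def by auto
  have "mij a x t > mij a x s"
    using T t s x I unfolding rameau_def by (metis DiffI subsetD)
  moreover have "mij a x s > mij a x t"
    using S t s x I unfolding rameau_def by (metis DiffI subsetD)
  ultimately show False by simp
qed

lemma finR: "finite (rameaux n a)"
proof -
  have "rameaux n a \<subseteq> Pow {1..n}" unfolding rameaux_def rameau_def by auto
  then show ?thesis by (rule finite_subset) simp
qed

lemma parent_props:
  assumes T: "rameau n a T" and ne: "T \<noteq> {1..n}"
  shows "rameau n a (parent n a T) \<and> T \<subset> parent n a T \<and>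
         (\<forall>S. rameau n a S \<and> T \<subset> S \<longrightarrow> parent n a T \<subseteq> S)"
proof -
  have TI: "T \<subseteq> {1..n}" and cT: "card T \<ge> 2" using T unfolding rameau_def by auto
  have "T \<noteq> {}" using cT by auto
  then obtain x where x: "x \<in> T" by blast
  define C where "C = (\<lambda>S. rameau n a S \<and> T \<subset> S)"
  have "C {1..n}" unfolding C_def using T0 TI ne by auto
  then obtain S0 where S0: "C S0" and mn: "\<forall>S. C S \<longrightarrow> card S0 \<le> card S"
    using ex_has_least_nat[of C "{1..n}" card] by blast
  have S0le: "S0 \<subseteq> S" if "C S" for S
  proof -
    have r: "rameau n a S" "rameau n a S0" "x \<in> S" "x \<in> S0" using that S0 x unfolding C_def by auto
    have fS0: "finite S0" using r(2) unfolding rameau_def by (meson finite_atLeastAtMost finite_subset)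
    from laminar[OF r(1,2,3,4)] show ?thesis
    proof
      assume "S \<subseteq> S0"
      moreover have "card S0 \<le> card S" using mn that by blast
      ultimately have "S = S0" using fS0 by (metis card_subset_eq card_mono le_antisym)
      then show ?thesis by simp
    qed simp
  qed
  have P: "C (parent n a T) \<and> (\<forall>S\<in>rameaux n a. T \<subset> S \<longrightarrow> parent n a T \<subseteq> S)"
    unfolding parent_def
  proof (rule theI2[where a = S0])
    show "S0 \<in> rameaux n a \<and> T \<subset> S0 \<and> (\<forall>S\<in>rameaux n a. T \<subset> S \<longrightarrow> S0 \<subseteq> S)"
      using S0 S0le unfolding C_def rameaux_def by auto
  next
    fix y assume "y \<in> rameaux n a \<and> T \<subset> y \<and> (\<forall>S\<in>rameaux n a. T \<subset> S \<longrightarrow> y \<subseteq> S)"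
    then show "y = S0" using S0 S0le unfolding C_def rameaux_def by (simp add: subset_antisym)
  next
    fix y assume "y \<in> rameaux n a \<and> T \<subset> y \<and> (\<forall>S\<in>rameaux n a. T \<subset> S \<longrightarrow> y \<subseteq> S)"
    then show "C y \<and> (\<forall>S\<in>rameaux n a. T \<subset> S \<longrightarrow> y \<subseteq> S)" unfolding C_def rameaux_def by auto
  qed
  then show ?thesis unfolding C_def rameaux_def by auto
qed

lemma sum_up:
  "rameau n a T \<Longrightarrow> (\<Sum>S\<in>{S\<in>rameaux n a. T \<subseteq> S}. gamma n a S) = alpha a T"
proof (induction "n - card T" arbitrary: T rule: less_induct)
  case less
  have TI: "T \<subseteq> {1..n}" using less.prems unfolding rameau_def by auto
  show ?case
  proof (cases "T = {1..n}")
    case True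
    have "{S\<in>rameaux n a. T \<subseteq> S} = {T}"
      using True T0 unfolding rameaux_def rameau_def by auto
    then show ?thesis using True by (simp add: gamma_def)
  next
    case False
    define P where "P = parent n a T"
    have PP: "rameau n a P" "T \<subset> P" "\<forall>S. rameau n a S \<and> T \<subset> S \<longrightarrow> P \<subseteq> S"
      using parent_props[OF less.prems False] unfolding P_def by auto
    have eq: "{S\<in>rameaux n a. T \<subseteq> S} = insert T {S\<in>rameaux n a. P \<subseteq> S}"
      using PP less.prems unfolding rameaux_def by auto
    have nin: "T \<notin> {S\<in>rameaux n a. P \<subseteq> S}" using PP by auto
    have fin: "finite {S\<in>rameaux n a. P \<subseteq> S}" using finR by simp
    have PI: "P \<subseteq> {1..n}" using PP unfolding rameau_def by auto
    have "card T < card P" using PP PI by (meson finite_atLeastAtMost finite_subset psubset_card_mono)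
    moreover have "card P \<le> n" using PI card_mono[OF _ PI] by simp
    ultimately have "n - card P < n - card T" by linarith
    then have IH: "(\<Sum>S\<in>{S\<in>rameaux n a. P \<subseteq> S}. gamma n a S) = alpha a P"
      using less.hyps PP(1) by blast
    show ?thesis unfolding eq using nin fin IH False by (simp add: gamma_def P_def)
  qed
qed

lemma ball:
  assumes i: "i \<in> {1..n}" and j: "j \<in> {1..n}" and ij: "i \<noteq> j"
  obtains B where "rameau n a B" "alpha a B = mij a i j"
    "\<And>T. rameau n a T \<Longrightarrow> (i \<in> T \<and> j \<in> T) \<longleftrightarrow> B \<subseteq> T"
proof -
  define B where "B = insert i {k\<in>{1..n}. k \<noteq> i \<and> mij a i j \<le> mij a i k}"
  have iB: "i \<in> B" and jB: "j \<in> B" using ij j unfolding B_def by auto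
  have BI: "B \<subseteq> {1..n}" using i unfolding B_def by auto
  have out: "mij a i k < mij a i j" "k \<noteq> i" if "k \<in> {1..n}" "k \<notin> B" for k
    using that unfolding B_def by auto
  have same: "mij a u k = mij a i k" if u: "u \<in> B" and k: "k \<in> {1..n}" "k \<notin> B" for u k
  proof (cases "u = i")
    case False
    have uI: "u \<in> {1..n}" using u BI by auto
    have iu: "mij a i u \<ge> mij a i j" using u False unfolding B_def by auto
    have ok: "mij a i k < mij a i j" "k \<noteq> i" using out[OF k] by auto
    have uk: "u \<noteq> k" using u k by auto
    have 1: "min (mij a i u) (mij a u k) \<le> mij a i k" using ultra[OF i uI k(1) False[symmetric] uk ok(2)[symmetric]] .
    have 2: "min (mij a u i) (mij a i k) \<le> mij a u k" using ultra[OF uI i k(1) False ok(2)[symmetric] uk] by auto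
    show ?thesis using 1 2 iu ok msym[of u i] by (auto simp: min_def split: if_splits)
  qed simp
  have big: "mij a u v \<ge> mij a i j" if "u \<in> B" "v \<in> B" "u \<noteq> v" for u v
  proof -
    have uI: "u \<in> {1..n}" "v \<in> {1..n}" using that BI by auto
    consider "u = i" | "v = i" | "u \<noteq> i" "v \<noteq> i" by blast
    then show ?thesis
    proof cases
      case 1 then show ?thesis using that unfolding B_def by auto
    next
      case 2 then show ?thesis using that msym[of u i] unfolding B_def by auto
    next
      case 3
      have "min (mij a u i) (mij a i v) \<le> mij a u v"
        using ultra[OF uI(1) i uI(2)] 3 that by auto
      moreover have "mij a i u \<ge> mij a i j" "mij a i v \<ge> mij a i j" using that 3 unfolding B_def by auto
      ultimately show ?thesis using msym[of u i] by linarith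
    qed
  qed
  have cB: "card B \<ge> 2"
  proof -
    have "{i, j} \<subseteq> B" using iB jB by auto
    moreover have "finite B" using BI by (meson finite_atLeastAtMost finite_subset)
    ultimately show ?thesis using ij by (metis card_2_iff card_mono)
  qed
  have rB: "rameau n a B"
    unfolding rameau_def
  proof (intro conjI ballI impI BI cB)
    fix u v k assume uv: "u \<in> B" "v \<in> B" "u \<noteq> v" and k: "k \<in> {1..n} - B"
    show "mij a u k < mij a u v"
      using same[OF uv(1)] big[OF uv] out k by force
    show "mij a u k = mij a v k" using same uv k by auto
  qed
  have aB: "alpha a B = mij a i j"
    unfolding alpha_def
  proof (rule Min_eqI)
    have "{mij a i j |i j. i \<in> B \<and> j \<in> B \<and> i \<noteq> j} \<subseteq> (\<lambda>(u,v). mij a u v) ` (B \<times> B)" by auto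
    moreover have "finite B" using BI by (meson finite_atLeastAtMost finite_subset)
    ultimately show "finite {mij a i j |i j. i \<in> B \<and> j \<in> B \<and> i \<noteq> j}" by (meson finite_SigmaI finite_imageI finite_subset)
  next
    show "\<And>y. y \<in> {mij a i j |i j. i \<in> B \<and> j \<in> B \<and> i \<noteq> j} \<Longrightarrow> mij a i j \<le> y" using big by auto
  next
    show "mij a i j \<in> {mij a i j |i j. i \<in> B \<and> j \<in> B \<and> i \<noteq> j}" using iB jB ij by auto
  qed
  have sub: "(i \<in> T \<and> j \<in> T) \<longleftrightarrow> B \<subseteq> T" if T: "rameau n a T" for T
  proof
    assume ijT: "i \<in> T \<and> j \<in> T"
    show "B \<subseteq> T"
    proof
      fix k assume kB: "k \<in> B"
      show "k \<in> T"
      proof (rule ccontr)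
        assume "k \<notin> T"
        then have "k \<noteq> i" "k \<in> {1..n} - T" using ijT kB BI by auto
        then have "mij a i j > mij a i k" using T ijT ij unfolding rameau_def by blast
        moreover have "mij a i j \<le> mij a i k" using kB \<open>k \<noteq> i\<close> unfolding B_def by auto
        ultimately show False by simp
      qed
    qed
  next
    assume "B \<subseteq> T" then show "i \<in> T \<and> j \<in> T" using iB jB by auto
  qed
  show ?thesis using that rB aB sub by blast
qed

lemma key:
  assumes "i \<in> {1..n}" "j \<in> {1..n}" "i \<noteq> j"
  shows "(\<Sum>T\<in>rameaux n a. if i \<in> T \<and> j \<in> T then gamma n a T else 0) = mij a i j"
proof -
  obtain B where B: "rameau n a B" "alpha a B = mij a i j"
    "\<And>T. rameau n a T \<Longrightarrow> (i \<in> T \<and> j \<in> T) \<longleftrightarrow> B \<subseteq> T"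
    using ball[OF assms] by blast
  have "(\<Sum>T\<in>rameaux n a. if i \<in> T \<and> j \<in> T then gamma n a T else 0)
      = (\<Sum>T\<in>rameaux n a. if B \<subseteq> T then gamma n a T else 0)"
    using B(3) unfolding rameaux_def by (intro sum.cong) auto
  also have "\<dots> = (\<Sum>S\<in>{S\<in>rameaux n a. B \<subseteq> S}. gamma n a S)"
    using finR by (simp add: sum.inter_filter)
  also have "\<dots> = mij a i j" using sum_up[OF B(1)] B(2) by simp
  finally show ?thesis .
qed

lemma main:
  assumes i: "i \<in> {1..n}" and j: "j \<in> {1..n}"
  shows "magic n a i j = (\<Sum>T\<in>rameaux n a. gamma n a T * AT T i j)"
proof (cases "i = j")
  case False
  have "(\<Sum>T\<in>rameaux n a. gamma n a T * AT T i j)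
     = - (\<Sum>T\<in>rameaux n a. if i \<in> T \<and> j \<in> T then gamma n a T else 0)"
    unfolding sum_negf[symmetric] using False by (intro sum.cong) (auto simp: AT_def)
  then show ?thesis using key[OF i j False] False by (simp add: magic_def)
next
  case True
  have eachT: "gamma n a T * AT T i i = (\<Sum>j\<in>{1..n} - {i}. if i \<in> T \<and> j \<in> T then gamma n a T else 0)"
    if T: "T \<in> rameaux n a" for T
  proof (cases "i \<in> T")
    case iT: True
    have TI: "T \<subseteq> {1..n}" using T unfolding rameaux_def rameau_def by auto
    have fT: "finite T" using TI by (meson finite_atLeastAtMost finite_subset)
    have "(\<Sum>j\<in>{1..n} - {i}. if i \<in> T \<and> j \<in> T then gamma n a T else 0)
        = (\<Sum>j\<in>{1..n} - {i}. if j \<in> T then gamma n a T else 0)" using iT by simp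
    also have "\<dots> = (\<Sum>j\<in>{j\<in>{1..n} - {i}. j \<in> T}. gamma n a T)"
      by (rule sum.inter_filter[symmetric]) simp
    also have "{j\<in>{1..n} - {i}. j \<in> T} = T - {i}" using TI by auto
    also have "(\<Sum>j\<in>T - {i}. gamma n a T) = gamma n a T * (of_nat (card T) - 1)"
    proof -
      have c1: "card T \<ge> 1" using iT fT by (metis One_nat_def Suc_leI card_gt_0_iff empty_iff)
      have "(\<Sum>j\<in>T - {i}. gamma n a T) = of_nat (card (T - {i})) * gamma n a T" by simp
      also have "card (T - {i}) = card T - 1" using iT fT by (simp add: card_Diff_singleton)
      also have "(of_nat (card T - 1) :: rat) = of_nat (card T) - 1" using c1 by (simp add: of_nat_diff)
      finally show ?thesis by (simp add: mult.commute)
    qed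
    finally show ?thesis using iT by (simp add: AT_def)
  qed (simp add: AT_def)
  have "(\<Sum>T\<in>rameaux n a. gamma n a T * AT T i j)
     = (\<Sum>T\<in>rameaux n a. \<Sum>j\<in>{1..n} - {i}. if i \<in> T \<and> j \<in> T then gamma n a T else 0)"
    using True eachT by (intro sum.cong) auto
  also have "\<dots> = (\<Sum>j\<in>{1..n} - {i}. \<Sum>T\<in>rameaux n a. if i \<in> T \<and> j \<in> T then gamma n a T else 0)"
    by (rule sum.swap)
  also have "\<dots> = (\<Sum>j\<in>{1..n} - {i}. mij a i j)"
    using i key by (intro sum.cong) auto
  finally show ?thesis using True by (simp add: magic_def mi_def)
qed

end

theorem mainTheorem5:
  fixes n :: nat and a :: "nat \<Rightarrow> rat \<Rightarrow> complex"
  assumes "n \<ge> 2"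
    and "\<forall>i\<in>{1..n}. a i \<in> puiseux"
    and "\<forall>i\<in>{1..n}. \<forall>j\<in>{1..n}. i \<noteq> j \<longrightarrow> a i \<noteq> a j"
  shows "\<forall>i\<in>{1..n}. \<forall>j\<in>{1..n}.
           magic n a i j = (\<Sum>T\<in>rameaux n a. gamma n a T * AT T i j)"
proof -
  interpret ctx n a using assms by unfold_locales
  show ?thesis using main by blast
qed

end
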